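(* Let $P>0$, $\Omega_0,\Omega_1,\Omega_2>0$, and let $h_0,h_1,h_2$ be independent with $h_i\sim\mathcal{CN}(0,\Omega_i)$; set $\gamma_i=P|h_i|^2$ and $\bar\gamma_i=\mathbb E\gamma_i=P\Omega_i$. For $N\in\{T_1,T_2,R\}$ let $\Gamma_N=\sum_{k=1}^{L_N}P_{I,N}|c_{N,k}|^2$ with $L_N\ge1$, $P_{I,N}>0$, $c_{N,k}\sim\mathcal{CN}(0,\Omega_{N,k})$, $\Omega_{N,k}>0$, all of $h_0,h_1,h_2,c_{N,k}$ mutually independent. Let $\Gamma'_N=\mathbb E(\Gamma_N)$ and $\Gamma''_N=\mathbb E(\Gamma_N^2)$. Let $\omega_1,\omega_2\in(0,1)$ with $\omega_1+\omega_2=1$. For $i\in\{1,2\}$ and $j\in\{1,2\}\setminus\{i\}$ define $$\Upsilon_{T_i,D}=\frac{\gamma_0}{\Gamma_{T_i}+1},\quad \Upsilon_{T_i,1}=\frac{\gamma_i}{\Gamma_{T_i}+1},\quad \Upsilon_{T_i,2}=\frac{\omega_j\gamma_j}{\Gamma_R+\omega_i\Gamma_{T_i}+\omega_i+1},\quad \Upsilon_{T_i}=\Upsilon_{T_i,D}+\frac{\Upsilon_{T_i,1}\Upsilon_{T_i,2}}{\Upsilon_{T_i,1}+\Upsilon_{T_i,2}},$$ let $P^{\mathcal O}_{T_i}(\gamma)=\Pr(\Upsilon_{T_i}<\gamma)$ and define the protocol outage probability $P^{\mathcal O}_{\rm pro}(\gamma)=P^{\mathcal O}_{T_1}(\gamma)+P^{\mathcal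 O}_{T_2}(\gamma)-P^{\mathcal O}_{T_1}(\gamma)P^{\mathcal O}_{T_2}(\gamma)$. Then, as $\gamma_{th}\to0^+$, $$P^{\mathcal O}_{\rm pro}(\gamma_{th})=\sum_{i=1}^{2}\frac{\gamma_{th}^2}{2\bar\gamma_0}\left(\frac{\omega_i\left(\Gamma''_{T_i}+2\Gamma'_{T_i}+1\right)+\left(\Gamma'_R+1\right)\left(\Gamma'_{T_i}+1\right)}{\omega_j\bar\gamma_j}+\frac{\Gamma''_{T_i}+2\Gamma'_{T_i}+1}{\bar\gamma_i}\right)+o(\gamma_{th}^2),$$ where in the $i$-th summand $j$ denotes the element of $\{1,2\}\setminus\{i\}$.
   Context: Model of a three-phase amplify-and-forward two-way relay network with terminals $T_1,T_2$, relay $R$ and co-channel interference: $h_0,h_1,h_2$ are the $T_1$–$T_2$, $T_1$–$R$, $T_2$–$R$ channels, $P$ the common transmit power, $\Gamma_N$ the total interference power at node $N$, $\omega_i$ the relay power-allocation coefficients, and $\Upsilon_{T_i}$ the received SINR at terminal $T_i$. $o(\gamma_{th}^2)$ denotes a quantity whose ratio to $\gamma_{th}^2$ tends to $0$. *)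

theory Defs
  imports "HOL-Probability.Probability" "HOL-Library.Landau_Symbols"
begin

datatype node = T1 | T2 | R

definition tnode :: "nat \<Rightarrow> node" where
  "tnode i = (if i = 1 then T1 else T2)"

definition CN_rv :: "'a measure \<Rightarrow> ('a \<Rightarrow> complex) \<Rightarrow> real \<Rightarrow> bool" where
  "CN_rv M X Om \<longleftrightarrow>
     distributed M lborel (\<lambda>x. Re (X x)) (normal_density 0 (sqrt (Om / 2))) \<and>
     distributed M lborel (\<lambda>x. Im (X x)) (normal_density 0 (sqrt (Om / 2))) \<and>
     prob_space.indep_var M borel (\<lambda>x. Re (X x)) borel (\<lambda>x. Im (X x))"

definition Gamma :: "(node \<Rightarrow> real) \<Rightarrow> (node \<Rightarrow> nat) \<Rightarrow> (node \<Rightarrow> nat \<Rightarrow> 'a \<Rightarrow> complex)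
    \<Rightarrow> node \<Rightarrow> 'a \<Rightarrow> real" where
  "Gamma PI L c N x = (\<Sum>k = 1..L N. PI N * (cmod (c N k x))\<^sup>2)"

definition sinr :: "real \<Rightarrow> (nat \<Rightarrow> real) \<Rightarrow> (nat \<Rightarrow> 'a \<Rightarrow> complex)
    \<Rightarrow> (node \<Rightarrow> 'a \<Rightarrow> real) \<Rightarrow> nat \<Rightarrow> 'a \<Rightarrow> real" where
  "sinr P w h G i x =
    (let j = 3 - i;
         g0 = P * (cmod (h 0 x))\<^sup>2;
         gi = P * (cmod (h i x))\<^sup>2;
         gj = P * (cmod (h j x))\<^sup>2;
         GT = G (tnode i) x;
         GR = G R x;
         uD = g0 / (GT + 1);
         u1 = gi / (GT + 1);
         u2 = w j * gj / (GR + w i * GT + w i + 1)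
     in uD + u1 * u2 / (u1 + u2))"

definition outage :: "'a measure \<Rightarrow> real \<Rightarrow> (nat \<Rightarrow> real) \<Rightarrow> (nat \<Rightarrow> 'a \<Rightarrow> complex)
    \<Rightarrow> (node \<Rightarrow> 'a \<Rightarrow> real) \<Rightarrow> nat \<Rightarrow> real \<Rightarrow> real" where
  "outage M P w h G i \<gamma> = measure M {x \<in> space M. sinr P w h G i x < \<gamma>}"

definition outage_pro :: "'a measure \<Rightarrow> real \<Rightarrow> (nat \<Rightarrow> real) \<Rightarrow> (nat \<Rightarrow> 'a \<Rightarrow> complex)
    \<Rightarrow> (node \<Rightarrow> 'a \<Rightarrow> real) \<Rightarrow> real \<Rightarrow> real" where
  "outage_pro M P w h G \<gamma> =
     outage M P w h G 1 \<gamma> + outage M P w h G 2 \<gamma> - outage M P w h G 1 \<gamma> * outage M P w h G 2 \<gamma>"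

end

theory Submission
  imports Defs "HOL-Real_Asymp.Real_Asymp"
begin


lemma even_nn_integral:
  fixes f :: "real \<Rightarrow> ennreal"
  assumes [measurable]: "f \<in> borel_measurable borel" and ev: "\<And>x. f (-x) = f x"
  shows "(\<integral>\<^sup>+x. f x \<partial>lborel) = 2 * (\<integral>\<^sup>+x. f x * indicator {0..} x \<partial>lborel)"
proof -
  have "(\<integral>\<^sup>+x. f x \<partial>lborel) = (\<integral>\<^sup>+x. f x * indicator {0..} x + f x * indicator {..<0} x \<partial>lborel)"
    by (intro nn_integral_cong) (auto split: split_indicator)
  also have "\<dots> = (\<integral>\<^sup>+x. f x * indicator {0..} x \<partial>lborel) + (\<integral>\<^sup>+x. f x * indicator {..<0} x \<partial>lborel)"
    by (rule nn_integral_add) auto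
  also have "(\<integral>\<^sup>+x. f x * indicator {..<0} x \<partial>lborel) = (\<integral>\<^sup>+x. f x * indicator {0<..} x \<partial>lborel)"
    using nn_integral_real_affine[of "\<lambda>x. f x * indicator {..<0} x" "-1" 0]
    by (simp add: ev indicator_def)
  also have "\<dots> = (\<integral>\<^sup>+x. f x * indicator {0..} x \<partial>lborel)"
    using AE_lborel_singleton[of 0] by (intro nn_integral_cong_AE) (auto split: split_indicator elim!: eventually_mono)
  finally show ?thesis by (simp add: mult_2)
qed

lemma nn_integral_arctan_all: "(\<integral>\<^sup>+s. ennreal (1 / (1 + s\<^sup>2)) \<partial>lborel) = ennreal pi"
proof -
  have "(\<integral>\<^sup>+s. ennreal (1 / (1 + s\<^sup>2)) \<partial>lborel) = 2 * (\<integral>\<^sup>+s. ennreal (1 / (1 + s\<^sup>2)) * indicator {0..} s \<partial>lborel)"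
    by (rule even_nn_integral) auto
  also have "(\<integral>\<^sup>+s. ennreal (1 / (1 + s\<^sup>2)) * indicator {0..} s \<partial>lborel) = ennreal (pi/2 - arctan 0)"
  proof (rule nn_integral_FTC_atLeast)
    show "(arctan \<longlongrightarrow> pi/2) at_top" by (rule tendsto_arctan_at_top)
  qed (auto intro!: derivative_eq_intros simp: add_nonneg_eq_0_iff field_simps power2_eq_square)
  finally show ?thesis using ennreal_mult[of 2 "pi/2"] by simp
qed

lemma radial:
  fixes k Om b :: real
  assumes k: "0 < k" and Om: "0 < Om" and b: "0 \<le> b"
  shows "(\<integral>\<^sup>+x. ennreal (\<bar>x\<bar> * exp (- (x\<^sup>2 * k) / Om) / (pi * Om)) * indicator {v. b < v} (x\<^sup>2 * k) \<partial>lborel)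
     = ennreal (exp (- b / Om) / (pi * k))"
proof -
  define a where "a = sqrt (b / k)"
  have a0: "0 \<le> a" unfolding a_def using k b by auto
  have aa: "a\<^sup>2 * k = b" unfolding a_def using k b by simp
  have "(\<integral>\<^sup>+x. ennreal (\<bar>x\<bar> * exp (- (x\<^sup>2 * k) / Om) / (pi * Om)) * indicator {v. b < v} (x\<^sup>2 * k) \<partial>lborel)
     = 2 * (\<integral>\<^sup>+x. ennreal (\<bar>x\<bar> * exp (- (x\<^sup>2 * k) / Om) / (pi * Om)) * indicator {v. b < v} (x\<^sup>2 * k) * indicator {0..} x \<partial>lborel)"
    by (rule even_nn_integral) auto
  also have "(\<integral>\<^sup>+x. ennreal (\<bar>x\<bar> * exp (- (x\<^sup>2 * k) / Om) / (pi * Om)) * indicator {v. b < v} (x\<^sup>2 * k) * indicator {0..} x \<partial>lborel)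
     = (\<integral>\<^sup>+x. ennreal (x * exp (- (x\<^sup>2 * k) / Om) / (pi * Om)) * indicator {a..} x \<partial>lborel)"
  proof (intro nn_integral_cong_AE)
    have "x \<noteq> a \<Longrightarrow> ennreal (\<bar>x\<bar> * exp (- (x\<^sup>2 * k) / Om) / (pi * Om)) * indicator {v. b < v} (x\<^sup>2 * k) * indicator {0..} x
      = ennreal (x * exp (- (x\<^sup>2 * k) / Om) / (pi * Om)) * indicator {a..} x" for x
    proof (cases "0 \<le> x")
      case True
      assume "x \<noteq> a"
      have "b < x\<^sup>2 * k \<longleftrightarrow> a < x"
      proof
        assume "b < x\<^sup>2 * k" hence "a\<^sup>2 * k < x\<^sup>2 * k" using aa by simp
        hence "a\<^sup>2 < x\<^sup>2" using k by simp
        thus "a < x" using True a0 by (meson power_less_imp_less_base)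
      next
        assume "a < x" hence "a\<^sup>2 < x\<^sup>2" using a0 by (simp add: power_strict_mono)
        thus "b < x\<^sup>2 * k" using aa k by (metis mult_strict_right_mono)
      qed
      thus ?thesis using True \<open>x \<noteq> a\<close> by (auto simp: indicator_def)
    next
      case False
      thus ?thesis using a0 by (auto simp: indicator_def)
    qed
    thus "AE x in lborel. ennreal (\<bar>x\<bar> * exp (- (x\<^sup>2 * k) / Om) / (pi * Om)) * indicator {v. b < v} (x\<^sup>2 * k) * indicator {0..} x
      = ennreal (x * exp (- (x\<^sup>2 * k) / Om) / (pi * Om)) * indicator {a..} x"
      using AE_lborel_singleton[of a] by (auto elim!: eventually_mono)
  qed
  also have "\<dots> = ennreal (0 - (- exp (- (a\<^sup>2 * k) / Om) / (2 * pi * k)))"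
  proof (rule nn_integral_FTC_atLeast)
    show "((\<lambda>x. - exp (- (x\<^sup>2 * k) / Om) / (2 * pi * k)) \<longlongrightarrow> 0) at_top"
    proof -
      have lim: "filterlim (\<lambda>x::real. x\<^sup>2 * k / Om) at_top at_top"
        using k Om by (intro filterlim_tendsto_pos_mult_at_top[OF tendsto_const] filterlim_pow_at_top filterlim_ident
           | simp add: divide_inverse mult.commute[of "_\<^sup>2"] mult.assoc)+
      have "((\<lambda>x. exp (- (x\<^sup>2 * k / Om))) \<longlongrightarrow> 0) at_top"
        by (rule filterlim_compose[OF exp_at_bot filterlim_compose[OF filterlim_uminus_at_bot_at_top lim]])
      hence "((\<lambda>x. - exp (- (x\<^sup>2 * k / Om)) / (2 * pi * k)) \<longlongrightarrow> - 0 / (2 * pi * k)) at_top"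
        using k by (intro tendsto_intros) auto
      thus ?thesis by simp
    qed
  qed (use k Om a0 in \<open>auto intro!: derivative_eq_intros simp: field_simps power2_eq_square\<close>)
  also have "2 * ennreal (0 - (- exp (- (a\<^sup>2 * k) / Om) / (2 * pi * k))) = ennreal (exp (- b / Om) / (pi * k))"
    using aa k ennreal_mult[of 2 "exp (- b / Om) / (2 * pi * k)"] by simp
  finally show ?thesis .
qed

lemma ennreal_abs_mult_aux: "ennreal \<bar>x\<bar> * (c * ennreal (e / d)) = c * ennreal (\<bar>x\<bar> * e / d)"
proof -
  have "ennreal (\<bar>x\<bar> * e / d) = ennreal \<bar>x\<bar> * ennreal (e / d)"
    by (simp add: ennreal_mult' times_divide_eq_right[symmetric] del: times_divide_eq_right)
  thus ?thesis by (simp add: mult_ac)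
qed

lemma gauss2_tail:
  fixes Om b :: real
  assumes Om: "0 < Om" and b: "0 \<le> b"
  shows "(\<integral>\<^sup>+x. \<integral>\<^sup>+y. ennreal (exp (- (x\<^sup>2 + y\<^sup>2) / Om) / (pi * Om)) * indicator {v. b < v} (x\<^sup>2 + y\<^sup>2) \<partial>lborel \<partial>lborel)
     = ennreal (exp (- b / Om))"
proof -
  let ?g = "\<lambda>x y. ennreal (exp (- (x\<^sup>2 + y\<^sup>2) / Om) / (pi * Om)) * indicator {v. b < v} (x\<^sup>2 + y\<^sup>2)"
  let ?h = "\<lambda>x s. ennreal (\<bar>x\<bar> * exp (- (x\<^sup>2 * (1 + s\<^sup>2)) / Om) / (pi * Om)) * indicator {v. b < v} (x\<^sup>2 * (1 + s\<^sup>2))"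
  have "(\<integral>\<^sup>+x. \<integral>\<^sup>+y. ?g x y \<partial>lborel \<partial>lborel) = (\<integral>\<^sup>+x. \<integral>\<^sup>+s. ?h x s \<partial>lborel \<partial>lborel)"
  proof (intro nn_integral_cong_AE)
    show "AE x in lborel. (\<integral>\<^sup>+y. ?g x y \<partial>lborel) = (\<integral>\<^sup>+s. ?h x s \<partial>lborel)"
      using AE_lborel_singleton[of 0]
    proof (rule eventually_mono)
      fix x :: real assume x: "x \<noteq> 0"
      have "(\<integral>\<^sup>+y. ?g x y \<partial>lborel) = ennreal \<bar>x\<bar> * (\<integral>\<^sup>+s. ?g x (0 + x * s) \<partial>lborel)"
        by (rule nn_integral_real_affine) (use x in auto)
      also have "\<dots> = (\<integral>\<^sup>+s. ?h x s \<partial>lborel)"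
        by (subst nn_integral_cmult[symmetric]) 
           (auto intro!: nn_integral_cong simp: ennreal_abs_mult_aux power_mult_distrib algebra_simps)
      finally show "(\<integral>\<^sup>+y. ?g x y \<partial>lborel) = (\<integral>\<^sup>+s. ?h x s \<partial>lborel)" .
    qed
  qed
  also have "\<dots> = (\<integral>\<^sup>+s. \<integral>\<^sup>+x. ?h x s \<partial>lborel \<partial>lborel)"
    by (rule lborel_pair.Fubini'[symmetric]) auto
  also have "\<dots> = (\<integral>\<^sup>+s. ennreal (exp (- b / Om) / pi) * ennreal (1 / (1 + s\<^sup>2)) \<partial>lborel)"
  proof (intro nn_integral_cong)
    fix s :: real
    have k: "0 < 1 + s\<^sup>2" by (simp add: add_pos_nonneg)
    show "(\<integral>\<^sup>+x. ?h x s \<partial>lborel) = ennreal (exp (- b / Om) / pi) * ennreal (1 / (1 + s\<^sup>2))"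
      using radial[OF k Om b] k by (simp add: ennreal_mult'[symmetric])
  qed
  also have "\<dots> = ennreal (exp (- b / Om) / pi) * ennreal pi"
    by (simp add: nn_integral_cmult nn_integral_arctan_all)
  also have "\<dots> = ennreal (exp (- b / Om))"
    by (simp add: ennreal_mult'[symmetric])
  finally show ?thesis .
qed

lemma normal_prod_eq:
  assumes Om: "0 < Om"
  shows "normal_density 0 (sqrt (Om / 2)) x * normal_density 0 (sqrt (Om / 2)) y
    = exp (- (x\<^sup>2 + y\<^sup>2) / Om) / (pi * Om)"
proof -
  have s: "(sqrt (Om / 2))\<^sup>2 = Om / 2" using Om by simp
  have "normal_density 0 (sqrt (Om / 2)) x = exp (- x\<^sup>2 / Om) / sqrt (pi * Om)" for x
    unfolding normal_density_def s using Om by (simp add: field_simps)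
  hence "normal_density 0 (sqrt (Om / 2)) x * normal_density 0 (sqrt (Om / 2)) y
     = exp (- x\<^sup>2 / Om) * exp (- y\<^sup>2 / Om) / (sqrt (pi * Om) * sqrt (pi * Om))" by simp
  also have "\<dots> = exp (- (x\<^sup>2 + y\<^sup>2) / Om) / (pi * Om)"
    using Om by (simp add: exp_add[symmetric] add_divide_distrib diff_divide_distrib)
  finally show ?thesis .
qed

lemma CN_sq_gt:
  assumes P: "prob_space M" and CN: "CN_rv M Z Om" and Om: "0 < Om" and b: "0 \<le> b"
  shows "measure M {x\<in>space M. b < (cmod (Z x))\<^sup>2} = exp (- b / Om)"
proof -
  interpret prob_space M by fact
  let ?n = "normal_density 0 (sqrt (Om / 2))"
  let ?R = "\<lambda>x. Re (Z x)" and ?I = "\<lambda>x. Im (Z x)"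
  have dR: "distributed M lborel ?R ?n" and dI: "distributed M lborel ?I ?n"
    and ind: "indep_var borel ?R borel ?I" using CN unfolding CN_rv_def by auto
  have mR[measurable]: "?R \<in> borel_measurable M" and mI[measurable]: "?I \<in> borel_measurable M"
    using dR dI by (auto simp: distributed_def)
  have DR: "distr M borel ?R = density lborel ?n"
    using dR by (simp add: distributed_def cong: distr_cong)
  have DI: "distr M borel ?I = density lborel ?n"
    using dI by (simp add: distributed_def cong: distr_cong)
  define S where "S = {z::real\<times>real. b < (fst z)\<^sup>2 + (snd z)\<^sup>2}"
  have "Measurable.pred (borel \<Otimes>\<^sub>M borel) (\<lambda>z::real\<times>real. b < (fst z)\<^sup>2 + (snd z)\<^sup>2)" by measurable
  hence S[measurable]: "S \<in> sets (borel \<Otimes>\<^sub>M borel)" unfolding S_def pred_def by (simp add: space_pair_measure)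
  have joint: "distr M (borel \<Otimes>\<^sub>M borel) (\<lambda>x. (?R x, ?I x)) = density lborel ?n \<Otimes>\<^sub>M density lborel ?n"
    using ind unfolding indep_var_distribution_eq DR DI by metis
  interpret D: prob_space "density lborel ?n" by (rule prob_space_normal_density) (use Om in simp)
  have "emeasure M {x\<in>space M. b < (cmod (Z x))\<^sup>2} = emeasure M ((\<lambda>x. (?R x, ?I x)) -` S \<inter> space M)"
    by (auto simp: S_def cmod_power2 intro!: arg_cong[where f="emeasure M"])
  also have "\<dots> = emeasure (distr M (borel \<Otimes>\<^sub>M borel) (\<lambda>x. (?R x, ?I x))) S"
    by (rule emeasure_distr[symmetric]) auto
  also have "\<dots> = emeasure (density lborel ?n \<Otimes>\<^sub>M density lborel ?n) S"
    unfolding joint ..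
  also have "\<dots> = (\<integral>\<^sup>+ x. \<integral>\<^sup>+ y. indicator S (x, y) \<partial>density lborel ?n \<partial>density lborel ?n)"
    by (rule D.emeasure_pair_measure) (simp add: sets_pair_measure_cong[OF sets_density sets_density])
  also have "\<dots> = (\<integral>\<^sup>+ x. \<integral>\<^sup>+ y. ennreal (exp (- (x\<^sup>2 + y\<^sup>2) / Om) / (pi * Om)) * indicator {v. b < v} (x\<^sup>2 + y\<^sup>2) \<partial>lborel \<partial>lborel)"
    apply (subst nn_integral_density)
      apply (simp_all add: nn_integral_density)
    apply (intro nn_integral_cong)
    apply (subst nn_integral_cmult[symmetric])
     apply simp
    apply (intro nn_integral_cong)
    apply (auto simp: S_def indicator_def ennreal_mult[symmetric] normal_prod_eq[OF Om])
    done
  also have "\<dots> = ennreal (exp (- b / Om))" by (rule gauss2_tail[OF Om b])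
  finally show ?thesis by (simp add: measure_def)
qed

lemma CN_exp:
  assumes P: "prob_space M" and CN: "CN_rv M Z Om" and Om: "0 < Om" and c: "0 < c"
  shows "distributed M lborel (\<lambda>x. c * (cmod (Z x))\<^sup>2) (exponential_density (1 / (c * Om)))"
proof -
  interpret prob_space M by fact
  have mR[measurable]: "(\<lambda>x. Re (Z x)) \<in> borel_measurable M" and mI[measurable]: "(\<lambda>x. Im (Z x)) \<in> borel_measurable M"
    using CN by (auto simp: CN_rv_def distributed_def)
  have m: "(\<lambda>x. c * (cmod (Z x))\<^sup>2) \<in> borel_measurable M"
    unfolding cmod_power2 by measurable
  show ?thesis
  proof (subst exponential_distributed_iff, safe)
    show "0 < 1 / (c * Om)" using c Om by simp
    show "(\<lambda>x. c * (cmod (Z x))\<^sup>2) \<in> borel_measurable M" by fact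
    fix a :: real assume a: "0 \<le> a"
    have "{x \<in> space M. c * (cmod (Z x))\<^sup>2 \<le> a} = space M - {x\<in>space M. a / c < (cmod (Z x))\<^sup>2}"
      using c by (auto simp: field_simps)
    have "prob {x \<in> space M. c * (cmod (Z x))\<^sup>2 \<le> a} = 1 - prob {x\<in>space M. a / c < (cmod (Z x))\<^sup>2}"
    proof -
      have "{x\<in>space M. a / c < (cmod (Z x))\<^sup>2} \<in> events" unfolding cmod_power2 by measurable
      thus ?thesis using \<open>_ = _\<close> by (simp add: prob_compl)
    qed
    also have "\<dots> = 1 - exp (- (a / c) / Om)"
      using CN_sq_gt[OF P CN Om, of "a/c"] a c by simp
    also have "\<dots> = 1 - exp (- a * (1 / (c * Om)))" by (simp add: field_simps)
    finally show "prob {x \<in> space M. c * (cmod (Z x))\<^sup>2 \<le> a} = 1 - exp (- a * (1 / (c * Om)))" .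
  qed
qed



lemma (in prob_space) cond_indep:
  fixes X Y :: "'a \<Rightarrow> 'b::second_countable_topology"
  assumes ind: "indep_var borel X borel Y"
    and Qm: "Measurable.pred borel (\<lambda>z::'b\<times>'b. Q (fst z) (snd z))"
  shows "(\<lambda>y. prob {x\<in>space M. Q (X x) (Y y)}) \<in> borel_measurable M"
    and "prob {x\<in>space M. Q (X x) (Y x)} = (\<integral>y. prob {x\<in>space M. Q (X x) (Y y)} \<partial>M)"
proof -
  have rX[measurable]: "X \<in> borel_measurable M" and rY[measurable]: "Y \<in> borel_measurable M"
    using ind by (auto dest: indep_var_rv1 indep_var_rv2)
  define S where "S = {z::'b\<times>'b. Q (fst z) (snd z)}"
  have S: "S \<in> sets (borel \<Otimes>\<^sub>M borel)"
    using Qm unfolding S_def pred_def borel_prod by simp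
  let ?DX = "distr M borel X" and ?DY = "distr M borel Y"
  interpret DX: prob_space ?DX by (rule prob_space_distr) simp
  interpret DY: prob_space ?DY by (rule prob_space_distr) simp
  interpret XY: pair_sigma_finite ?DX ?DY ..
  have joint: "?DX \<Otimes>\<^sub>M ?DY = distr M (borel \<Otimes>\<^sub>M borel) (\<lambda>x. (X x, Y x))"
    using ind unfolding indep_var_distribution_eq by metis
  have S': "S \<in> sets (?DX \<Otimes>\<^sub>M ?DY)"
    using S by (simp add: sets_pair_measure_cong[OF sets_distr sets_distr])
  have slice: "emeasure ?DX ((\<lambda>x. (x, y)) -` S) = emeasure M {x\<in>space M. Q (X x) y}" for y
  proof -
    have "(\<lambda>x. (x, y)) -` S \<in> sets borel"
      using measurable_sets[OF measurable_Pair2'[of y borel borel] S]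
      by (simp add: space_pair_measure)
    thus ?thesis
      by (subst emeasure_distr) (auto simp: S_def intro!: arg_cong[where f="emeasure M"])
  qed
  have gm: "(\<lambda>y. emeasure ?DX ((\<lambda>x. (x, y)) -` S)) \<in> borel_measurable ?DY"
    by (rule XY.measurable_emeasure_Pair2[OF S'])
  hence gm': "(\<lambda>y. emeasure M {x\<in>space M. Q (X x) y}) \<in> borel_measurable borel"
    unfolding slice by (simp add: measurable_distr_eq1)
  have gm2: "(\<lambda>y. prob {x\<in>space M. Q (X x) y}) \<in> borel_measurable borel"
    using borel_measurable_enn2real[OF gm'] by (simp add: measure_def)
  show m: "(\<lambda>y. prob {x\<in>space M. Q (X x) (Y y)}) \<in> borel_measurable M"
    using measurable_compose[OF rY gm2] by simp
  have "emeasure M {x\<in>space M. Q (X x) (Y x)} = emeasure M ((\<lambda>x. (X x, Y x)) -` S \<inter> space M)"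
    by (auto simp: S_def intro!: arg_cong[where f="emeasure M"])
  also have "\<dots> = emeasure (distr M (borel \<Otimes>\<^sub>M borel) (\<lambda>x. (X x, Y x))) S"
    by (rule emeasure_distr[symmetric]) (auto simp: S)
  also have "\<dots> = emeasure (?DX \<Otimes>\<^sub>M ?DY) S" unfolding joint ..
  also have "\<dots> = (\<integral>\<^sup>+y. emeasure ?DX ((\<lambda>x. (x, y)) -` S) \<partial>?DY)"
    by (rule XY.emeasure_pair_measure_alt2[OF S'])
  also have "\<dots> = (\<integral>\<^sup>+y. emeasure M {x\<in>space M. Q (X x) y} \<partial>?DY)"
    unfolding slice ..
  also have "\<dots> = (\<integral>\<^sup>+y. emeasure M {x\<in>space M. Q (X x) (Y y)} \<partial>M)"
    by (rule nn_integral_distr) (use gm' in auto)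
  also have "\<dots> = (\<integral>\<^sup>+y. ennreal (prob {x\<in>space M. Q (X x) (Y y)}) \<partial>M)"
    by (simp add: emeasure_eq_measure)
  also have "\<dots> = ennreal (\<integral>y. prob {x\<in>space M. Q (X x) (Y y)} \<partial>M)"
    by (rule nn_integral_eq_integral) (auto intro!: integrable_const_bound[where B=1] m)
  finally show "prob {x\<in>space M. Q (X x) (Y x)} = (\<integral>y. prob {x\<in>space M. Q (X x) (Y y)} \<partial>M)"
    by (simp add: emeasure_eq_measure integral_nonneg_AE)
qed

lemma H_bounds:
  fixes u v :: real assumes u: "0 \<le> u" and v: "0 \<le> v"
  shows "0 \<le> u * v / (u + v)" and "u * v / (u + v) \<le> min u v" and "min u v \<le> 2 * (u * v / (u + v))"
proof -
  show "0 \<le> u * v / (u + v)" using u v by simp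
  show "u * v / (u + v) \<le> min u v"
  proof (cases "u + v = 0")
    case True thus ?thesis using u v by simp
  next
    case False
    hence p: "0 < u + v" using u v by simp
    have "u * v \<le> u * (u + v)" "u * v \<le> v * (u + v)" using u v by (simp_all add: algebra_simps)
    thus ?thesis using p by (simp add: divide_le_eq)
  qed
  show "min u v \<le> 2 * (u * v / (u + v))"
  proof (cases "u + v = 0")
    case True thus ?thesis using u v by simp
  next
    case False
    hence p: "0 < u + v" using u v by simp
    have "min u v * (u + v) \<le> 2 * (u * v)"
    proof (cases "u \<le> v")
      case True thus ?thesis using u v by (simp add: algebra_simps mult_left_mono)
    next
      case False thus ?thesis using u v by (simp add: algebra_simps mult_right_mono)
    qed
    thus ?thesis using p by (simp add: le_divide_eq mult_ac)
  qed
qed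

lemma key_ineq:
  fixes w u v g :: real
  assumes w: "0 \<le> w" and u: "0 \<le> u" and v: "0 \<le> v" and g: "0 < g"
    and lt: "w + u * v / (u + v) < g" and nlt: "\<not> (w + min u v < g + g * sqrt g)"
  shows "w < g \<and> ((u < 2 * g \<and> v < 4 * sqrt g) \<or> (v < 2 * g \<and> u < 4 * sqrt g))"
proof -
  let ?H = "u * v / (u + v)"
  note hb = H_bounds[OF u v]
  have wg: "w < g" using lt hb(1) by linarith
  have Hg: "?H < g" using lt w by linarith
  have gap: "min u v - ?H > g * sqrt g" using lt nlt by linarith
  have sg: "0 < sqrt g" using g by simp
  have p: "0 < u + v"
  proof (rule ccontr)
    assume "\<not> 0 < u + v" hence "u = 0" "v = 0" using u v by auto
    moreover have "0 < g * sqrt g" using g sg by simp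
    ultimately show False using gap by simp
  qed
  have eps: "0 < g * sqrt g" using g sg by simp
  have main: "a < 2 * g \<and> b < 4 * sqrt g" if ab: "a \<le> b" "0 \<le> a" "0 \<le> b" "0 < a + b"
      and Hab: "a * b / (a + b) < g" and gab: "a - a * b / (a + b) > g * sqrt g" for a b :: real
  proof
    have "a * (a + b) \<le> 2 * (a * b)" using ab by (simp add: algebra_simps mult_left_mono)
    hence "a / 2 \<le> a * b / (a + b)" using ab(4) by (simp add: le_divide_eq field_simps)
    thus a2: "a < 2 * g" using Hab by linarith
    have "a - a * b / (a + b) = a * a / (a + b)" using ab(4) by (simp add: field_simps)
    hence "g * sqrt g * (a + b) < a * a" using gab ab(4) by (simp add: less_divide_eq)
    moreover have "g * sqrt g * b \<le> g * sqrt g * (a + b)" by (rule mult_left_mono) (use ab eps in auto)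
    ultimately have "g * sqrt g * b < a * a" by linarith
    also have "a * a < (2 * g) * (2 * g)" using a2 ab by (intro mult_strict_mono) auto
    also have "(2 * g) * (2 * g) = (g * sqrt g) * (4 * sqrt g)"
      using g by (simp add: algebra_simps power2_eq_square[symmetric])
    finally show "b < 4 * sqrt g" using eps mult_less_cancel_left_pos by blast
  qed
  show ?thesis
  proof (cases "u \<le> v")
    case True
    thus ?thesis using main[of u v] u v p Hg gap wg by simp
  next
    case False
    have "v * u / (v + u) = ?H" by (simp add: mult_ac add_ac)
    thus ?thesis using main[of v u] u v p Hg gap wg False by simp
  qed
qed


lemma pred_borel_prod:
  "Measurable.pred (borel \<Otimes>\<^sub>M borel) P \<Longrightarrow> Measurable.pred borel (P :: 'a::second_countable_topology \<times> 'b::second_countable_topology \<Rightarrow> bool)"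
  by (simp add: borel_prod)

definition Fexp :: "real \<Rightarrow> real \<Rightarrow> real" where
  "Fexp r t = (if 0 \<le> t then 1 - exp (- t * r) else 0)"

lemma Fexp_le: assumes "0 < r" shows "Fexp r t \<le> r * max 0 t"
proof (cases "0 \<le> t")
  case True
  have "1 - t * r \<le> exp (- t * r)" using exp_ge_add_one_self[of "- t * r"] by simp
  thus ?thesis using True by (simp add: Fexp_def mult_ac)
qed (simp add: Fexp_def)

lemma Fexp_nonneg: assumes "0 < r" shows "0 \<le> Fexp r t"
  using assms by (auto simp: Fexp_def mult_nonneg_nonneg)

lemma Fexp_le1: "Fexp r t \<le> 1"
  by (auto simp: Fexp_def)

lemma Fexp_ge: assumes r: "0 < r" and t: "t \<le> s" shows "r * (1 - r * s) * max 0 t \<le> Fexp r t"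
proof (cases "0 \<le> t")
  case True
  define x where "x = t * r"
  have x0: "0 \<le> x" using True r by (simp add: x_def)
  have "1 + x \<le> exp x" by (rule exp_ge_add_one_self)
  hence "exp (- x) \<le> 1 / (1 + x)" using x0 by (simp add: exp_minus field_simps)
  hence "x / (1 + x) \<le> 1 - exp (- x)" using x0 by (simp add: field_simps)
  moreover have "x * (1 - x) \<le> x / (1 + x)" using x0 by (simp add: field_simps mult_nonneg_nonneg)
  moreover have "r * (1 - r * s) * t \<le> x * (1 - x)"
    unfolding x_def using True r t
    by (simp add: algebra_simps mult_left_mono mult_right_mono power2_eq_square)
  ultimately show ?thesis using True by (simp add: Fexp_def x_def)
next
  case False thus ?thesis using r by (simp add: Fexp_def)
qed

context prob_space begin

lemma distributed_no_atom:
  assumes D: "distributed M lborel X f"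
  shows "prob {x\<in>space M. X x = t} = 0"
proof -
  have "emeasure M (X -` {t} \<inter> space M) = (\<integral>\<^sup>+x. f x * indicator {t} x \<partial>lborel)"
    by (rule distributed_emeasure[OF D]) simp
  also have "\<dots> = 0"
    using AE_lborel_singleton[of t] by (intro nn_integral_zero') (auto elim!: eventually_mono)
  finally show ?thesis by (auto simp: measure_def vimage_def Int_def conj_commute)
qed

lemma exp_lt:
  assumes D: "distributed M lborel X (exponential_density r)" and r: "0 < r"
  shows "prob {x\<in>space M. X x < t} = Fexp r t"
proof -
  have mX[measurable]: "X \<in> borel_measurable M" using D r by (simp add: exponential_distributed_iff)
  show ?thesis
  proof (cases "0 \<le> t")
    case True
    have "{x\<in>space M. X x < t} = {x\<in>space M. X x \<le> t} - {x\<in>space M. X x = t}" by auto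
    hence "prob {x\<in>space M. X x < t} = prob {x\<in>space M. X x \<le> t} - prob {x\<in>space M. X x = t}"
      by (simp add: finite_measure_Diff subset_eq)
    also have "\<dots> = 1 - exp (- t * r)"
      using exponential_distributedD_le[OF D True r] distributed_no_atom[OF D] by simp
    finally show ?thesis using True by (simp add: Fexp_def)
  next
    case False
    have "prob {x\<in>space M. X x < t} \<le> prob {x\<in>space M. X x \<le> 0}"
      using False by (intro finite_measure_mono) auto
    also have "\<dots> = 0" using exponential_distributedD_le[OF D _ r, of 0] by simp
    finally show ?thesis using False by (simp add: Fexp_def measure_le_0_iff)
  qed
qed

lemma exp_lt_le:
  assumes D: "distributed M lborel X (exponential_density r)" and r: "0 < r" and t: "0 \<le> t"
  shows "prob {x\<in>space M. X x < t} \<le> r * t"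
  using exp_lt[OF D r, of t] Fexp_le[OF r, of t] t by simp

lemma exp_scale:
  assumes D: "distributed M lborel X (exponential_density r)" and r: "0 < r" and c: "0 < c"
  shows "distributed M lborel (\<lambda>x. c * X x) (exponential_density (r / c))"
proof -
  have mX[measurable]: "X \<in> borel_measurable M" using D r by (simp add: exponential_distributed_iff)
  show ?thesis
  proof (subst exponential_distributed_iff, safe)
    show "0 < r / c" using r c by simp
    show "(\<lambda>x. c * X x) \<in> borel_measurable M" by simp
    fix a :: real assume a: "0 \<le> a"
    have "{x\<in>space M. c * X x \<le> a} = {x\<in>space M. X x \<le> a / c}" using c by (auto simp: field_simps)
    thus "prob {x\<in>space M. c * X x \<le> a} = 1 - exp (- a * (r / c))"
      using exponential_distributedD_le[OF D _ r, of "a / c"] a c by simp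
  qed
qed

lemma exp_mean_part:
  assumes DM: "distributed M lborel Mn (exponential_density k)" and k: "0 < k" and s: "0 \<le> s"
  shows "(\<integral>y. max 0 (s - Mn y) \<partial>M) = s - (1 - exp (- k * s)) / k"
proof -
  have "(\<integral>y. max 0 (s - Mn y) \<partial>M) = (\<integral>x. exponential_density k x * max 0 (s - x) \<partial>lborel)"
    by (rule distributed_integral[OF DM, symmetric]) (auto simp: exponential_density_nonneg[OF k])
  also have "\<dots> = (\<integral>x. indicator {0..s} x *\<^sub>R (k * exp (- x * k) * (s - x)) \<partial>lborel)"
    by (intro Bochner_Integration.integral_cong) (auto simp: exponential_density_def indicator_def)
  also have "\<dots> = (\<lambda>m. - (s - m) * exp (- k * m) + exp (- k * m) / k) s - (\<lambda>m. - (s - m) * exp (- k * m) + exp (- k * m) / k) 0"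
  proof (rule integral_FTC_atLeastAtMost[OF s])
    show "continuous_on {0..s} (\<lambda>x. k * exp (- x * k) * (s - x))"
      by (intro continuous_intros)
    fix x assume "0 \<le> x" "x \<le> s"
    show "((\<lambda>m. - (s - m) * exp (- k * m) + exp (- k * m) / k) has_vector_derivative k * exp (- x * k) * (s - x)) (at x within {0..s})"
      unfolding has_real_derivative_iff_has_vector_derivative[symmetric]
      using k by (auto intro!: derivative_eq_intros simp: field_simps)
  qed
  also have "\<dots> = s - (1 - exp (- k * s)) / k" using k by (simp add: field_simps)
  finally show ?thesis .
qed

lemma Q_lim:
  assumes DW: "distributed M lborel W (exponential_density v)" and DM: "distributed M lborel Mn (exponential_density k)"
    and v: "0 < v" and k: "0 < k" and ind: "indep_var borel W borel Mn"
    and nnM: "\<And>x. x \<in> space M \<Longrightarrow> 0 \<le> Mn x"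
  shows "((\<lambda>s. prob {x\<in>space M. W x + Mn x < s} / s\<^sup>2) \<longlongrightarrow> v * k / 2) (at_right 0)"
proof -
  have mW[measurable]: "W \<in> borel_measurable M" using DW v by (simp add: exponential_distributed_iff)
  have mM[measurable]: "Mn \<in> borel_measurable M" using DM k by (simp add: exponential_distributed_iff)
  have mF[measurable]: "Fexp v \<in> borel_measurable borel" unfolding Fexp_def by measurable
  define e where "e s = s - (1 - exp (- k * s)) / k" for s
  have Qeq: "prob {x\<in>space M. W x + Mn x < s} = (\<integral>y. Fexp v (s - Mn y) \<partial>M)" for s
  proof -
    have "prob {x\<in>space M. W x + Mn x < s} = (\<integral>y. prob {x\<in>space M. W x + Mn y < s} \<partial>M)"
      by (rule cond_indep(2)[OF ind, where Q="\<lambda>u w. u + w < s"]) (rule pred_borel_prod, measurable)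
    also have "\<dots> = (\<integral>y. Fexp v (s - Mn y) \<partial>M)"
    proof (intro Bochner_Integration.integral_cong refl)
      fix y
      have "{x\<in>space M. W x + Mn y < s} = {x\<in>space M. W x < s - Mn y}" by auto
      thus "prob {x\<in>space M. W x + Mn y < s} = Fexp v (s - Mn y)" using exp_lt[OF DW v] by simp
    qed
    finally show ?thesis .
  qed
  have int1: "integrable M (\<lambda>y. Fexp v (s - Mn y))" for s
    by (rule integrable_const_bound[where B=1]) (use Fexp_nonneg[OF v] Fexp_le1 in auto)
  have int2: "integrable M (\<lambda>y. max 0 (s - Mn y))" if "0 \<le> s" for s
    by (rule integrable_const_bound[where B=s]) (use that nnM in auto)
  have up: "prob {x\<in>space M. W x + Mn x < s} \<le> v * e s" if s: "0 < s" for s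
  proof -
    have "(\<integral>y. Fexp v (s - Mn y) \<partial>M) \<le> (\<integral>y. v * max 0 (s - Mn y) \<partial>M)"
      by (intro integral_mono int1 integrable_mult_right int2) (use s Fexp_le[OF v] in auto)
    also have "\<dots> = v * e s" using exp_mean_part[OF DM k, of s] s by (simp add: e_def)
    finally show ?thesis using Qeq by simp
  qed
  have low: "v * (1 - v * s) * e s \<le> prob {x\<in>space M. W x + Mn x < s}" if s: "0 < s" for s
  proof -
    have "v * (1 - v * s) * e s = (\<integral>y. v * (1 - v * s) * max 0 (s - Mn y) \<partial>M)"
      using exp_mean_part[OF DM k, of s] s by (simp add: e_def)
    also have "\<dots> \<le> (\<integral>y. Fexp v (s - Mn y) \<partial>M)"
      by (intro integral_mono int1 integrable_mult_right int2) (use s nnM Fexp_ge[OF v] in auto)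
    finally show ?thesis using Qeq by simp
  qed
  have glim: "((\<lambda>x::real. (x - 1 + exp (- x)) / x\<^sup>2) \<longlongrightarrow> 1/2) (at_right 0)"
    by real_asymp
  have klim: "filterlim (\<lambda>s. k * s) (at_right 0) (at_right 0)"
    using k by real_asymp
  have "((\<lambda>s. k * (((k * s) - 1 + exp (- (k * s))) / (k * s)\<^sup>2)) \<longlongrightarrow> k / 2) (at_right 0)"
    using tendsto_mult[OF tendsto_const filterlim_compose[OF glim klim], of k] by simp
  moreover have "eventually (\<lambda>s. k * (((k * s) - 1 + exp (- (k * s))) / (k * s)\<^sup>2) = e s / s\<^sup>2) (at_right 0)"
    using eventually_at_right_less[of 0]
    by (rule eventually_mono) (use k in \<open>simp add: e_def field_simps power2_eq_square\<close>)
  ultimately have elim: "((\<lambda>s. e s / s\<^sup>2) \<longlongrightarrow> k / 2) (at_right 0)"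
    by (rule Lim_transform_eventually)
  have c1: "((\<lambda>s. v * (1 - v * s)) \<longlongrightarrow> v * (1 - v * 0)) (at_right 0)"
    by (intro tendsto_intros)
  have L1: "((\<lambda>s. v * (1 - v * s) * (e s / s\<^sup>2)) \<longlongrightarrow> v * (1 - v * 0) * (k / 2)) (at_right 0)"
    by (rule tendsto_mult[OF c1 elim])
  have L2: "((\<lambda>s. v * (e s / s\<^sup>2)) \<longlongrightarrow> v * (k / 2)) (at_right 0)"
    by (rule tendsto_mult[OF tendsto_const elim])
  show ?thesis
  proof (rule tendsto_sandwich[OF _ _ _ _])
    show "eventually (\<lambda>s. v * (1 - v * s) * (e s / s\<^sup>2) \<le> prob {x\<in>space M. W x + Mn x < s} / s\<^sup>2) (at_right 0)"
      using eventually_at_right_less[of 0]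
    proof (rule eventually_mono)
      fix s :: real assume s: "0 < s"
      have "v * (1 - v * s) * e s / s\<^sup>2 \<le> prob {x\<in>space M. W x + Mn x < s} / s\<^sup>2"
        by (rule divide_right_mono[OF low[OF s]]) simp
      thus "v * (1 - v * s) * (e s / s\<^sup>2) \<le> prob {x\<in>space M. W x + Mn x < s} / s\<^sup>2" by simp
    qed
    show "eventually (\<lambda>s. prob {x\<in>space M. W x + Mn x < s} / s\<^sup>2 \<le> v * (e s / s\<^sup>2)) (at_right 0)"
      using eventually_at_right_less[of 0]
    proof (rule eventually_mono)
      fix s :: real assume s: "0 < s"
      have "prob {x\<in>space M. W x + Mn x < s} / s\<^sup>2 \<le> v * e s / s\<^sup>2"
        by (rule divide_right_mono[OF up[OF s]]) simp
      thus "prob {x\<in>space M. W x + Mn x < s} / s\<^sup>2 \<le> v * (e s / s\<^sup>2)" by simp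
    qed
  qed (use L1 L2 in auto)
qed

lemma indep_var_from_vars:
  assumes ind: "indep_vars (\<lambda>_. N) X I" and AB: "A \<inter> B = {}" "A \<subseteq> I" "B \<subseteq> I"
    and f: "f \<in> measurable (PiM A (\<lambda>_. N)) N1" and g: "g \<in> measurable (PiM B (\<lambda>_. N)) N2"
  shows "indep_var N1 (\<lambda>x. f (restrict (\<lambda>i. X i x) A)) N2 (\<lambda>x. g (restrict (\<lambda>i. X i x) B))"
  using indep_var_compose[OF indep_var_restrict[OF ind AB] f g] by (simp add: comp_def)

lemma core2:
  fixes T :: "nat \<Rightarrow> 'a \<Rightarrow> real" and r :: "nat \<Rightarrow> real"
  assumes ind: "indep_vars (\<lambda>_. borel) T {0,1,2}"
    and D: "\<And>n. n \<in> {0,1,2} \<Longrightarrow> distributed M lborel (T n) (exponential_density (r n))"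
    and r: "\<And>n. n \<in> {0,1,2} \<Longrightarrow> 0 < r n"
    and nn: "\<And>n x. n \<in> {0,1,2} \<Longrightarrow> x \<in> space M \<Longrightarrow> 0 \<le> T n x"
  shows "((\<lambda>g. prob {x\<in>space M. T 0 x + T 1 x * T 2 x / (T 1 x + T 2 x) < g} / g\<^sup>2) \<longlongrightarrow> r 0 * (r 1 + r 2) / 2) (at_right 0)"
    and "\<And>g. 0 < g \<Longrightarrow> prob {x\<in>space M. T 0 x + T 1 x * T 2 x / (T 1 x + T 2 x) < g} \<le> 2 * r 0 * (r 1 + r 2) * g\<^sup>2"
proof -
  have D0: "distributed M lborel (T 0) (exponential_density (r 0))" and D1: "distributed M lborel (T 1) (exponential_density (r 1))"
    and D2: "distributed M lborel (T 2) (exponential_density (r 2))" using D by auto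
  have r0: "0 < r 0" and r1: "0 < r 1" and r2: "0 < r 2" using r by auto
  have nn0: "\<And>x. x \<in> space M \<Longrightarrow> 0 \<le> T 0 x" and nn1: "\<And>x. x \<in> space M \<Longrightarrow> 0 \<le> T 1 x"
    and nn2: "\<And>x. x \<in> space M \<Longrightarrow> 0 \<le> T 2 x" using nn by auto
  have m0[measurable]: "T 0 \<in> borel_measurable M" using D0 r0 by (simp add: exponential_distributed_iff)
  have m1[measurable]: "T 1 \<in> borel_measurable M" using D1 r1 by (simp add: exponential_distributed_iff)
  have m2[measurable]: "T 2 \<in> borel_measurable M" using D2 r2 by (simp add: exponential_distributed_iff)
  define Mn where "Mn x = min (T 1 x) (T 2 x)" for x
  have mMn[measurable]: "Mn \<in> borel_measurable M" unfolding Mn_def by measurable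
  have ind12: "indep_var borel (T 1) borel (T 2)"
    using indep_var_from_vars[OF ind, of "{1}" "{2}" "\<lambda>\<omega>. \<omega> 1" borel "\<lambda>\<omega>. \<omega> 2" borel]
    by (simp add: measurable_component_singleton)
  have ind0M: "indep_var borel (T 0) borel Mn"
    using indep_var_from_vars[OF ind, of "{0}" "{1,2}" "\<lambda>\<omega>. \<omega> 0" borel "\<lambda>\<omega>. min (\<omega> 1) (\<omega> 2)" borel]
    by (simp add: measurable_component_singleton Mn_def[abs_def])
  have DMn: "distributed M lborel Mn (exponential_density (r 1 + r 2))"
    unfolding Mn_def[abs_def] by (rule exponential_distributed_min[OF r1 r2 D1 D2 ind12])
  have nnMn: "\<And>x. x \<in> space M \<Longrightarrow> 0 \<le> Mn x" using nn1 nn2 by (simp add: Mn_def)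
  let ?G = "\<lambda>g. prob {x\<in>space M. T 0 x + T 1 x * T 2 x / (T 1 x + T 2 x) < g}"
  let ?Q = "\<lambda>s. prob {x\<in>space M. T 0 x + Mn x < s}"
  have triple: "prob {x\<in>space M. T 0 x < c0 \<and> T 1 x < c1 \<and> T 2 x < c2}
      = prob {x\<in>space M. T 0 x < c0} * prob {x\<in>space M. T 1 x < c1} * prob {x\<in>space M. T 2 x < c2}" for c0 c1 c2
  proof -
    define c where "c n = (if n = 0 then c0 else if n = 1 then c1 else c2)" for n :: nat
    have "prob (\<Inter>i\<in>{0,1,2}. T i -` {..<c i} \<inter> space M) = (\<Prod>i\<in>{0,1,2}. prob (T i -` {..<c i} \<inter> space M))"
      by (rule indep_varsD[OF ind]) auto
    moreover have "(\<Inter>i\<in>{0,1,2}. T i -` {..<c i} \<inter> space M) = {x\<in>space M. T 0 x < c0 \<and> T 1 x < c1 \<and> T 2 x < c2}"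
      by (auto simp: c_def)
    moreover have "T n -` {..<a} \<inter> space M = {x\<in>space M. T n x < a}" for n a by auto
    ultimately show ?thesis by (simp add: c_def mult_ac)
  qed
  show dom: "?G g \<le> 2 * r 0 * (r 1 + r 2) * g\<^sup>2" if g: "0 < g" for g
  proof -
    have "?G g \<le> prob {x\<in>space M. T 0 x \<in> {..<g} \<and> Mn x \<in> {..<2*g}}"
    proof (rule finite_measure_mono)
      show "{x\<in>space M. T 0 x + T 1 x * T 2 x / (T 1 x + T 2 x) < g} \<subseteq> {x\<in>space M. T 0 x \<in> {..<g} \<and> Mn x \<in> {..<2*g}}"
      proof (rule subsetI)
        fix x assume "x \<in> {x\<in>space M. T 0 x + T 1 x * T 2 x / (T 1 x + T 2 x) < g}"
        hence x: "x \<in> space M" and lt: "T 0 x + T 1 x * T 2 x / (T 1 x + T 2 x) < g" by auto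
        note hb = H_bounds[OF nn1[OF x] nn2[OF x]]
        have "T 0 x < g" using lt hb(1) by linarith
        moreover have "Mn x < 2*g" using lt hb(3) nn0[OF x] unfolding Mn_def by linarith
        ultimately show "x \<in> {x\<in>space M. T 0 x \<in> {..<g} \<and> Mn x \<in> {..<2*g}}" using x by auto
      qed
    qed simp
    also have "\<dots> = prob {x\<in>space M. T 0 x \<in> {..<g}} * prob {x\<in>space M. Mn x \<in> {..<2*g}}"
      by (rule prob_indep_random_variable[OF ind0M]) auto
    also have "\<dots> \<le> (r 0 * g) * ((r 1 + r 2) * (2 * g))"
      using exp_lt_le[OF D0 r0, of g] exp_lt_le[OF DMn _, of "2*g"] g r0 r1 r2
      by (intro mult_mono) (auto simp: mult_nonneg_nonneg)
    finally show ?thesis by (simp add: power2_eq_square mult_ac)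
  qed
  have low: "?Q g \<le> ?G g" for g
  proof (rule finite_measure_mono)
    show "{x\<in>space M. T 0 x + Mn x < g} \<subseteq> {x\<in>space M. T 0 x + T 1 x * T 2 x / (T 1 x + T 2 x) < g}"
    proof (rule subsetI)
      fix x assume "x \<in> {x\<in>space M. T 0 x + Mn x < g}"
      hence x: "x \<in> space M" and lt: "T 0 x + Mn x < g" by auto
      note hb = H_bounds[OF nn1[OF x] nn2[OF x]]
      have "T 0 x + T 1 x * T 2 x / (T 1 x + T 2 x) < g" using lt hb(2) unfolding Mn_def by linarith
      thus "x \<in> {x\<in>space M. T 0 x + T 1 x * T 2 x / (T 1 x + T 2 x) < g}" using x by auto
    qed
  qed measurable
  have up: "?G g \<le> ?Q (g + g * sqrt g) + 16 * r 0 * r 1 * r 2 * g\<^sup>2 * sqrt g" if g: "0 < g" for g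
  proof -
    let ?B = "{x\<in>space M. T 0 x + Mn x < g + g * sqrt g}"
    let ?C = "{x\<in>space M. T 0 x < g \<and> T 1 x < 2 * g \<and> T 2 x < 4 * sqrt g}"
    let ?D = "{x\<in>space M. T 0 x < g \<and> T 1 x < 4 * sqrt g \<and> T 2 x < 2 * g}"
    have "?G g \<le> prob (?B \<union> (?C \<union> ?D))"
    proof (rule finite_measure_mono)
      show "{x\<in>space M. T 0 x + T 1 x * T 2 x / (T 1 x + T 2 x) < g} \<subseteq> ?B \<union> (?C \<union> ?D)"
      proof (rule subsetI)
        fix x assume "x \<in> {x\<in>space M. T 0 x + T 1 x * T 2 x / (T 1 x + T 2 x) < g}"
        hence x: "x \<in> space M" and lt: "T 0 x + T 1 x * T 2 x / (T 1 x + T 2 x) < g" by auto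
        show "x \<in> ?B \<union> (?C \<union> ?D)"
        proof (cases "T 0 x + Mn x < g + g * sqrt g")
          case True thus ?thesis using x by auto
        next
          case False
          from key_ineq[OF nn0[OF x] nn1[OF x] nn2[OF x] g lt] False x show ?thesis by (auto simp: Mn_def)
        qed
      qed
    qed measurable
    also have "\<dots> \<le> prob ?B + (prob ?C + prob ?D)"
      by (intro order.trans[OF measure_Un_le] add_left_mono measure_Un_le; measurable)
    also have "prob ?C \<le> (r 0 * g) * (r 1 * (2 * g)) * (r 2 * (4 * sqrt g))"
      unfolding triple using exp_lt_le[OF D0 r0, of g] exp_lt_le[OF D1 r1, of "2*g"] exp_lt_le[OF D2 r2, of "4 * sqrt g"] g r0 r1 r2
      by (intro mult_mono) (auto simp: mult_nonneg_nonneg)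
    also have "prob ?D \<le> (r 0 * g) * (r 1 * (4 * sqrt g)) * (r 2 * (2 * g))"
      unfolding triple using exp_lt_le[OF D0 r0, of g] exp_lt_le[OF D2 r2, of "2*g"] exp_lt_le[OF D1 r1, of "4 * sqrt g"] g r0 r1 r2
      by (intro mult_mono) (auto simp: mult_nonneg_nonneg)
    finally show ?thesis by (simp add: power2_eq_square algebra_simps)
  qed
  have Qlim: "((\<lambda>s. ?Q s / s\<^sup>2) \<longlongrightarrow> r 0 * (r 1 + r 2) / 2) (at_right 0)"
    by (rule Q_lim[OF D0 DMn r0 _ ind0M nnMn]) (use r1 r2 in simp)
  have slim: "filterlim (\<lambda>g::real. g + g * sqrt g) (at_right 0) (at_right 0)"
    by real_asymp
  have fac: "((\<lambda>g::real. (1 + sqrt g)\<^sup>2) \<longlongrightarrow> 1) (at_right 0)"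
    by real_asymp
  have err: "((\<lambda>g::real. 16 * r 0 * r 1 * r 2 * sqrt g) \<longlongrightarrow> 0) (at_right 0)"
    by real_asymp
  have U1: "((\<lambda>g. ?Q (g + g * sqrt g) / (g + g * sqrt g)\<^sup>2 * (1 + sqrt g)\<^sup>2 + 16 * r 0 * r 1 * r 2 * sqrt g)
      \<longlongrightarrow> r 0 * (r 1 + r 2) / 2 * 1 + 0) (at_right 0)"
    by (intro tendsto_add tendsto_mult filterlim_compose[OF Qlim slim] fac err)
  show "((\<lambda>g. ?G g / g\<^sup>2) \<longlongrightarrow> r 0 * (r 1 + r 2) / 2) (at_right 0)"
  proof (rule tendsto_sandwich[OF _ _ Qlim])
    show "eventually (\<lambda>g. ?Q g / g\<^sup>2 \<le> ?G g / g\<^sup>2) (at_right 0)"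
      by (intro always_eventually allI divide_right_mono low) simp
    show "eventually (\<lambda>g. ?G g / g\<^sup>2 \<le> ?Q (g + g * sqrt g) / (g + g * sqrt g)\<^sup>2 * (1 + sqrt g)\<^sup>2 + 16 * r 0 * r 1 * r 2 * sqrt g) (at_right 0)"
      using eventually_at_right_less[of 0]
    proof (rule eventually_mono)
      fix g :: real assume g: "0 < g"
      have e1: "(g + g * sqrt g)\<^sup>2 = g\<^sup>2 * (1 + sqrt g)\<^sup>2" by (simp add: algebra_simps power2_eq_square)
      have p1: "0 < 1 + sqrt g" using g by (simp add: add_pos_nonneg)
      hence pos: "0 < (1 + sqrt g)\<^sup>2" by simp
      have "?G g / g\<^sup>2 \<le> (?Q (g + g * sqrt g) + 16 * r 0 * r 1 * r 2 * g\<^sup>2 * sqrt g) / g\<^sup>2"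
        by (rule divide_right_mono[OF up[OF g]]) simp
      also have "\<dots> = ?Q (g + g * sqrt g) / (g + g * sqrt g)\<^sup>2 * (1 + sqrt g)\<^sup>2 + 16 * r 0 * r 1 * r 2 * sqrt g"
        using g pos p1 unfolding e1 by (simp add: field_simps)
      finally show "?G g / g\<^sup>2 \<le> ?Q (g + g * sqrt g) / (g + g * sqrt g)\<^sup>2 * (1 + sqrt g)\<^sup>2 + 16 * r 0 * r 1 * r 2 * sqrt g" .
    qed
    show "((\<lambda>g. ?Q (g + g * sqrt g) / (g + g * sqrt g)\<^sup>2 * (1 + sqrt g)\<^sup>2 + 16 * r 0 * r 1 * r 2 * sqrt g)
      \<longlongrightarrow> r 0 * (r 1 + r 2) / 2) (at_right 0)" using U1 by simp
  qed
qed

lemma core3: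
  fixes Y :: "nat \<Rightarrow> 'a \<Rightarrow> real" and r :: "nat \<Rightarrow> real" and a b wj :: real
  assumes ind: "indep_vars (\<lambda>_. borel) Y {0,1,2}"
    and D: "\<And>n. n \<in> {0,1,2} \<Longrightarrow> distributed M lborel (Y n) (exponential_density (r n))"
    and r: "\<And>n. n \<in> {0,1,2} \<Longrightarrow> 0 < r n"
    and nn: "\<And>n x. n \<in> {0,1,2} \<Longrightarrow> x \<in> space M \<Longrightarrow> 0 \<le> Y n x"
    and a: "0 < a" and b: "0 < b" and wj: "0 < wj"
  shows "((\<lambda>g. prob {x\<in>space M. Y 0 x / a + Y 1 x / a * (wj * Y 2 x / b) / (Y 1 x / a + wj * Y 2 x / b) < g} / g\<^sup>2)
            \<longlongrightarrow> (a * r 0) * (a * r 1 + b * r 2 / wj) / 2) (at_right 0)"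
    and "\<And>g. 0 < g \<Longrightarrow> prob {x\<in>space M. Y 0 x / a + Y 1 x / a * (wj * Y 2 x / b) / (Y 1 x / a + wj * Y 2 x / b) < g}
            \<le> 2 * (a * r 0) * (a * r 1 + b * r 2 / wj) * g\<^sup>2"
proof -
  define c where "c n = (if n = 2 then wj / b else 1 / a)" for n :: nat
  have c: "0 < c n" for n using a b wj by (simp add: c_def)
  define T where "T n x = c n * Y n x" for n x
  have indT: "indep_vars (\<lambda>_. borel) T {0,1,2}"
    unfolding T_def[abs_def] by (rule indep_vars_compose2[OF ind, where Y="\<lambda>n y. c n * y"]) simp
  have DT: "distributed M lborel (T n) (exponential_density (r n / c n))" if "n \<in> {0,1,2}" for n
    unfolding T_def[abs_def] by (rule exp_scale[OF D[OF that] r[OF that] c])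
  have rT: "0 < r n / c n" if "n \<in> {0,1,2}" for n using r[OF that] c[of n] by simp
  have nnT: "0 \<le> T n x" if "n \<in> {0,1,2}" "x \<in> space M" for n x
    unfolding T_def using nn[OF that] c[of n] by simp
  have eq: "{x\<in>space M. Y 0 x / a + Y 1 x / a * (wj * Y 2 x / b) / (Y 1 x / a + wj * Y 2 x / b) < g}
      = {x\<in>space M. T 0 x + T 1 x * T 2 x / (T 1 x + T 2 x) < g}" for g
    by (simp add: T_def c_def)
  have rr: "r 0 / c 0 * (r 1 / c 1 + r 2 / c 2) = (a * r 0) * (a * r 1 + b * r 2 / wj)"
    using a b wj by (simp add: c_def field_simps)
  have C1: "((\<lambda>g. prob {x\<in>space M. T 0 x + T 1 x * T 2 x / (T 1 x + T 2 x) < g} / g\<^sup>2) \<longlongrightarrow> r 0 / c 0 * (r 1 / c 1 + r 2 / c 2) / 2) (at_right 0)"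
    by (rule core2(1)[OF indT, where r="\<lambda>n. r n / c n"]) (auto intro: DT rT nnT)
  have C2: "prob {x\<in>space M. T 0 x + T 1 x * T 2 x / (T 1 x + T 2 x) < g} \<le> 2 * (r 0 / c 0) * (r 1 / c 1 + r 2 / c 2) * g\<^sup>2" if "0 < g" for g
    by (rule core2(2)[OF indT, where r="\<lambda>n. r n / c n"]) (auto intro: DT rT nnT that)
  show "((\<lambda>g. prob {x\<in>space M. Y 0 x / a + Y 1 x / a * (wj * Y 2 x / b) / (Y 1 x / a + wj * Y 2 x / b) < g} / g\<^sup>2)
            \<longlongrightarrow> (a * r 0) * (a * r 1 + b * r 2 / wj) / 2) (at_right 0)"
    unfolding eq rr[symmetric] by (rule C1)
  show "prob {x\<in>space M. Y 0 x / a + Y 1 x / a * (wj * Y 2 x / b) / (Y 1 x / a + wj * Y 2 x / b) < g}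
            \<le> 2 * (a * r 0) * (a * r 1 + b * r 2 / wj) * g\<^sup>2" if "0 < g" for g
  proof -
    have rr2: "2 * (r 0 / c 0) * (r 1 / c 1 + r 2 / c 2) = 2 * (a * r 0) * (a * r 1 + b * r 2 / wj)"
      using rr by (simp add: mult.assoc)
    show ?thesis unfolding eq rr2[symmetric] by (rule C2[OF that])
  qed
qed

end



lemma alg_K:
  fixes P o0 oi oj wi wj E2 EG EGR :: real
  assumes "0 < P" "0 < o0" "0 < oi" "0 < oj" "0 < wj"
  shows "1 / (P * o0) * (1 / (P * oi) + 1 / (P * oj) * wi / wj) / 2 * E2 + 1 / (P * o0) * (1 / (P * oj)) / (2 * wj) * ((EG + 1) * (EGR + 1))
    = 1 / (2 * (P * o0)) * ((wi * E2 + (EGR + 1) * (EG + 1)) / (wj * (P * oj)) + E2 / (P * oi))"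
  using assms by (simp add: field_simps)

lemma meas_comp_PiM:
  assumes "a \<in> A" and [measurable]: "f \<in> borel_measurable borel"
  shows "(\<lambda>\<omega>. f (\<omega> a)) \<in> borel_measurable (PiM A (\<lambda>_. borel))"
  using measurable_compose[OF measurable_component_singleton[OF assms(1)] assms(2)] by simp

lemma meas_sum_PiM:
  assumes "\<And>k. k \<in> K \<Longrightarrow> e k \<in> A"
  shows "(\<lambda>\<omega>. \<Sum>k\<in>K. q * (cmod (\<omega> (e k)))\<^sup>2) \<in> borel_measurable (PiM A (\<lambda>_. borel))"
  by (intro borel_measurable_sum meas_comp_PiM assms) measurable

lemma (in prob_space) Gamma_facts:
  fixes c :: "node \<Rightarrow> nat \<Rightarrow> 'a \<Rightarrow> complex"
  assumes PI: "0 < PI N" and cn: "\<And>k. 1 \<le> k \<Longrightarrow> k \<le> L N \<Longrightarrow> 0 < Omc N k \<and> CN_rv M (c N k) (Omc N k)"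
  shows "Gamma PI L c N \<in> borel_measurable M"
    and "integrable M (Gamma PI L c N)"
    and "integrable M (\<lambda>x. (Gamma PI L c N x)\<^sup>2)"
    and "\<And>x. 0 \<le> Gamma PI L c N x"
proof -
  define a where "a k x = PI N * (cmod (c N k x))\<^sup>2" for k x
  have Dk: "distributed M lborel (a k) (exponential_density (1 / (PI N * Omc N k)))" if "k \<in> {1..L N}" for k
    unfolding a_def[abs_def] using cn[of k] that by (intro CN_exp[OF prob_space_axioms _ _ PI]) auto
  have rk: "0 < 1 / (PI N * Omc N k)" if "k \<in> {1..L N}" for k using cn[of k] that PI by simp
  have ma[measurable]: "a k \<in> borel_measurable M" if "k \<in> {1..L N}" for k
    using Dk[OF that] rk[OF that] by (simp add: exponential_distributed_iff)
  have ia: "integrable M (\<lambda>x. a k x ^ n)" if "k \<in> {1..L N}" for k n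
    by (rule erlang_ith_moment_integrable[OF rk[OF that] Dk[OF that]])
  have nna: "0 \<le> a k x" for k x unfolding a_def using PI by simp
  have G: "Gamma PI L c N x = (\<Sum>k\<in>{1..L N}. a k x)" for x
    unfolding Gamma_def a_def by simp
  show "Gamma PI L c N \<in> borel_measurable M"
    unfolding G[abs_def] by (intro borel_measurable_sum) (use ma in auto)
  show "integrable M (Gamma PI L c N)"
  proof -
    have "integrable M (a k)" if "k \<in> {1..L N}" for k using ia[OF that, of 1] by simp
    thus ?thesis unfolding G[abs_def] by (intro Bochner_Integration.integrable_sum) auto
  qed
  show "0 \<le> Gamma PI L c N x" for x unfolding G by (intro sum_nonneg nna)
  have sq: "(Gamma PI L c N x)\<^sup>2 = (\<Sum>k\<in>{1..L N}. \<Sum>l\<in>{1..L N}. a k x * a l x)" for x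
    unfolding G power2_eq_square by (simp add: sum_product)
  have ipair: "integrable M (\<lambda>x. a k x * a l x)" if "k \<in> {1..L N}" "l \<in> {1..L N}" for k l
  proof (rule Bochner_Integration.integrable_bound)
    show "integrable M (\<lambda>x. a k x ^ 2 + a l x ^ 2)" using ia that by auto
    show "(\<lambda>x. a k x * a l x) \<in> borel_measurable M" using ma that by auto
    show "AE x in M. norm (a k x * a l x) \<le> norm (a k x ^ 2 + a l x ^ 2)"
    proof (intro AE_I2)
      fix x
      have "0 \<le> (a k x - a l x)\<^sup>2" by simp
      hence "2 * (a k x * a l x) \<le> a k x ^ 2 + a l x ^ 2" by (simp add: power2_diff)
      moreover have "0 \<le> a k x * a l x" using nna[of k x] nna[of l x] by simp
      ultimately have "a k x * a l x \<le> a k x ^ 2 + a l x ^ 2" by linarith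
      thus "norm (a k x * a l x) \<le> norm (a k x ^ 2 + a l x ^ 2)"
        using nna[of k x] nna[of l x] by simp
    qed
  qed
  show "integrable M (\<lambda>x. (Gamma PI L c N x)\<^sup>2)"
    unfolding sq by (intro Bochner_Integration.integrable_sum ipair) auto
qed

definition Phi :: "(nat \<Rightarrow> real) \<Rightarrow> nat \<Rightarrow> real \<times> real \<times> real \<Rightarrow> real \<times> real \<times> real \<Rightarrow> real" where
  "Phi w i u v = (let a = fst v + 1; b = fst (snd v) + w i * fst v + w i + 1 in
     fst u / a + fst (snd u) / a * (w (3 - i) * snd (snd u) / b) / (fst (snd u) / a + w (3 - i) * snd (snd u) / b))"

lemma sinr_eq:
  "sinr P w h G i x = Phi w i (P * (cmod (h 0 x))\<^sup>2, P * (cmod (h i x))\<^sup>2, P * (cmod (h (3 - i) x))\<^sup>2) (G (tnode i) x, G R x, 0)"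
  unfolding sinr_def Phi_def Let_def by simp

lemma Phi_pred: "Measurable.pred borel (\<lambda>z::(real\<times>real\<times>real)\<times>(real\<times>real\<times>real). Phi w i (fst z) (snd z) < g)"
  unfolding Phi_def Let_def borel_prod[symmetric] by measurable

theorem theorem2:
  fixes M :: "'a measure" and P :: real and Om :: "nat \<Rightarrow> real"
    and h :: "nat \<Rightarrow> 'a \<Rightarrow> complex" and L :: "node \<Rightarrow> nat" and PI :: "node \<Rightarrow> real"
    and c :: "node \<Rightarrow> nat \<Rightarrow> 'a \<Rightarrow> complex" and Omc :: "node \<Rightarrow> nat \<Rightarrow> real"
    and w :: "nat \<Rightarrow> real"
  assumes "prob_space M"
    and "P > 0"
    and "\<forall>i\<in>{0,1,2}. Om i > 0 \<and> CN_rv M (h i) (Om i)"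
    and "\<forall>N. L N \<ge> 1 \<and> PI N > 0"
    and "\<forall>N k. 1 \<le> k \<and> k \<le> L N \<longrightarrow> Omc N k > 0 \<and> CN_rv M (c N k) (Omc N k)"
    and "prob_space.indep_vars M (\<lambda>_. borel)
           (\<lambda>i. case i of Inl n \<Rightarrow> h n | Inr p \<Rightarrow> c (fst p) (snd p))
           ({0, 1, 2} <+> {(N, k). 1 \<le> k \<and> k \<le> L N})"
    and "0 < w 1" and "w 1 < 1" and "0 < w 2" and "w 2 < 1" and "w 1 + w 2 = 1"
  shows "(\<lambda>\<gamma>. outage_pro M P w h (Gamma PI L c) \<gamma>
            - (\<Sum>i\<in>{1, 2::nat}. \<gamma>\<^sup>2 / (2 * (P * Om 0)) *
                ((w i * ((\<integral>x. (Gamma PI L c (tnode i) x)\<^sup>2 \<partial>M)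
                         + 2 * (\<integral>x. Gamma PI L c (tnode i) x \<partial>M) + 1)
                  + ((\<integral>x. Gamma PI L c R x \<partial>M) + 1) * ((\<integral>x. Gamma PI L c (tnode i) x \<partial>M) + 1))
                   / (w (3 - i) * (P * Om (3 - i)))
                 + ((\<integral>x. (Gamma PI L c (tnode i) x)\<^sup>2 \<partial>M)
                     + 2 * (\<integral>x. Gamma PI L c (tnode i) x \<partial>M) + 1) / (P * Om i))))
         \<in> o[at_right 0](\<lambda>\<gamma>. \<gamma>\<^sup>2)"
  proof -
  note assms
  interpret prob_space M by fact
  have Pp: "0 < P" by fact
  have hyp_h: "\<And>n. n \<in> {0,1,2} \<Longrightarrow> 0 < Om n \<and> CN_rv M (h n) (Om n)" using assms(3) by blast
  have hyp_L: "\<And>N. 1 \<le> L N \<and> 0 < PI N" using assms(4) by blast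
  have hyp_c: "\<And>N k. 1 \<le> k \<Longrightarrow> k \<le> L N \<Longrightarrow> 0 < Omc N k \<and> CN_rv M (c N k) (Omc N k)" using assms(5) by blast
  define Zf where "Zf = (\<lambda>i. case i of Inl n \<Rightarrow> h n | Inr p \<Rightarrow> c (fst p) (snd p))"
  define I where "I = ({0, 1, 2::nat} <+> {(N, k). 1 \<le> k \<and> k \<le> L N})"
  have ind: "indep_vars (\<lambda>_. borel) Zf I" using assms(6) unfolding Zf_def I_def .
  define X where "X n x = P * (cmod (h n x))\<^sup>2" for n x
  define Gm where "Gm = Gamma PI L c"
  define r where "r n = 1 / (P * Om n)" for n
  have DX: "distributed M lborel (X n) (exponential_density (r n))" if "n \<in> {0,1,2}" for n
    unfolding X_def[abs_def] r_def using hyp_h[OF that] by (intro CN_exp[OF prob_space_axioms _ _ Pp]) auto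
  have rpos: "0 < r n" if "n \<in> {0,1,2}" for n using hyp_h[OF that] Pp by (simp add: r_def)
  have nnX: "0 \<le> X n x" for n x using Pp by (simp add: X_def)
  have GmF: "Gm N \<in> borel_measurable M" "integrable M (Gm N)" "integrable M (\<lambda>x. (Gm N x)\<^sup>2)" "\<And>x. 0 \<le> Gm N x" for N
    unfolding Gm_def using Gamma_facts[of PI N L Omc c] hyp_L hyp_c by auto
  define K where "K i = 1 / (2 * (P * Om 0)) *
                ((w i * ((\<integral>x. (Gm (tnode i) x)\<^sup>2 \<partial>M) + 2 * (\<integral>x. Gm (tnode i) x \<partial>M) + 1)
                  + ((\<integral>x. Gm R x \<partial>M) + 1) * ((\<integral>x. Gm (tnode i) x \<partial>M) + 1))
                   / (w (3 - i) * (P * Om (3 - i)))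
                 + ((\<integral>x. (Gm (tnode i) x)\<^sup>2 \<partial>M) + 2 * (\<integral>x. Gm (tnode i) x \<partial>M) + 1) / (P * Om i))" for i
  have per_i: "((\<lambda>g. outage M P w h Gm i g / g\<^sup>2) \<longlongrightarrow> K i) (at_right 0)" if i: "i \<in> {1,2}" for i
  proof -
    define j where "j = 3 - i"
    have j: "j \<in> {1,2}" "i \<noteq> j" "i \<noteq> 0" "j \<noteq> 0" using i by (auto simp: j_def)
    define T where "T = tnode i"
    have TR: "T \<noteq> R" by (simp add: T_def tnode_def)
    define Xt where "Xt x = (X 0 x, X i x, X j x)" for x
    define Yt where "Yt x = (Gm T x, Gm R x, 0::real)" for x
    define SN where "SN N = (Inr ` ({N} \<times> {1..L N}) :: (nat + node \<times> nat) set)" for N :: node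
    have SN_I: "SN N \<subseteq> I" for N by (auto simp: SN_def I_def)
    have SN_disj: "SN T \<inter> SN R = {}" using TR by (auto simp: SN_def)
    have Zf_Inr: "Zf (Inr (N, k)) = c N k" for N k by (simp add: Zf_def)
    have Zf_Inl: "Zf (Inl n) = h n" for n by (simp add: Zf_def)
    have Gm_eq: "Gm N x = (\<Sum>k\<in>{1..L N}. PI N * (cmod (c N k x))\<^sup>2)" for N x
      by (simp add: Gm_def Gamma_def)
    have indXY: "indep_var borel Xt borel Yt"
    proof -
      let ?A = "Inl ` {0, 1, 2::nat} :: (nat + node \<times> nat) set"
      let ?B = "SN T \<union> SN R"
      let ?f = "\<lambda>\<omega>. (P * (cmod (\<omega> (Inl 0)))\<^sup>2, P * (cmod (\<omega> (Inl i)))\<^sup>2, P * (cmod (\<omega> (Inl j)))\<^sup>2)"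
      let ?g = "\<lambda>\<omega>. (\<Sum>k\<in>{1..L T}. PI T * (cmod (\<omega> (Inr (T, k))))\<^sup>2, \<Sum>k\<in>{1..L R}. PI R * (cmod (\<omega> (Inr (R, k))))\<^sup>2, 0::real)"
      have AB: "?A \<inter> ?B = {}" "?A \<subseteq> I" "?B \<subseteq> I" using SN_I by (auto simp: SN_def I_def)
      have iA: "Inl 0 \<in> ?A" "Inl i \<in> ?A" "Inl j \<in> ?A" using i j by auto
      have fm: "?f \<in> borel_measurable (PiM ?A (\<lambda>_. borel))"
        using iA by (intro borel_measurable_Pair meas_comp_PiM) auto
      have gm: "?g \<in> borel_measurable (PiM ?B (\<lambda>_. borel))"
        by (intro borel_measurable_Pair meas_sum_PiM) (auto simp: SN_def)
      have "indep_var borel (\<lambda>x. ?f (restrict (\<lambda>i. Zf i x) ?A)) borel (\<lambda>x. ?g (restrict (\<lambda>i. Zf i x) ?B))"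
        by (rule indep_var_from_vars[OF ind AB fm gm])
      moreover have "(\<lambda>x. ?f (restrict (\<lambda>i. Zf i x) ?A)) = Xt"
        using iA by (auto simp: fun_eq_iff Xt_def X_def Zf_Inl)
      moreover have "(\<lambda>x. ?g (restrict (\<lambda>i. Zf i x) ?B)) = Yt"
        by (auto simp: fun_eq_iff Yt_def Gm_eq SN_def Zf_Inr intro!: sum.cong)
      ultimately show ?thesis by simp
    qed
    have indG: "indep_var borel (\<lambda>x. Gm T x + 1) borel (\<lambda>x. Gm R x + 1)"
    proof -
      let ?f = "\<lambda>\<omega>. (\<Sum>k\<in>{1..L T}. PI T * (cmod (\<omega> (Inr (T, k))))\<^sup>2) + 1"
      let ?g = "\<lambda>\<omega>. (\<Sum>k\<in>{1..L R}. PI R * (cmod (\<omega> (Inr (R, k))))\<^sup>2) + (1::real)"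
      have fm: "?f \<in> borel_measurable (PiM (SN T) (\<lambda>_. borel))"
        by (intro borel_measurable_add meas_sum_PiM borel_measurable_const) (auto simp: SN_def)
      have gm: "?g \<in> borel_measurable (PiM (SN R) (\<lambda>_. borel))"
        by (intro borel_measurable_add meas_sum_PiM borel_measurable_const) (auto simp: SN_def)
      have "indep_var borel (\<lambda>x. ?f (restrict (\<lambda>i. Zf i x) (SN T))) borel (\<lambda>x. ?g (restrict (\<lambda>i. Zf i x) (SN R)))"
        by (rule indep_var_from_vars[OF ind SN_disj SN_I SN_I fm gm])
      moreover have "(\<lambda>x. ?f (restrict (\<lambda>i. Zf i x) (SN T))) = (\<lambda>x. Gm T x + 1)"
        by (auto simp: fun_eq_iff Gm_eq SN_def Zf_Inr intro!: sum.cong)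
      moreover have "(\<lambda>x. ?g (restrict (\<lambda>i. Zf i x) (SN R))) = (\<lambda>x. Gm R x + 1)"
        by (auto simp: fun_eq_iff Gm_eq SN_def Zf_Inr intro!: sum.cong)
      ultimately show ?thesis by simp
    qed
    define sg where "sg n = (if n = 0 then 0 else if n = 1 then i else j)" for n :: nat
    have sg_in: "sg n \<in> {0,1,2}" for n using i j by (auto simp: sg_def)
    have indY: "indep_vars (\<lambda>_. borel) (\<lambda>n. X (sg n)) {0,1,2}"
    proof -
      have r1: "indep_vars (\<lambda>n. PiM {Inl (sg n)} (\<lambda>_. borel)) (\<lambda>n x. restrict (\<lambda>i. Zf i x) {Inl (sg n)}) {0,1,2::nat}"
        by (rule indep_vars_restrict[OF ind]) (use sg_in i j in \<open>auto simp: I_def disjoint_family_on_def sg_def\<close>)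
      have r2: "indep_vars (\<lambda>_. borel) (\<lambda>n x. (\<lambda>\<omega>. P * (cmod (\<omega> (Inl (sg n))))\<^sup>2) (restrict (\<lambda>i. Zf i x) {Inl (sg n)})) {0,1,2::nat}"
        by (rule indep_vars_compose2[OF r1]) (intro meas_comp_PiM; simp)
      show ?thesis
        using r2 by (rule indep_vars_cong[THEN iffD1, rotated -1]) (auto simp: fun_eq_iff X_def Zf_Inl)
    qed
    have sinr_x: "sinr P w h Gm i x = Phi w i (Xt x) (Yt x)" for x
      by (simp add: sinr_eq Xt_def X_def Yt_def T_def j_def)
    define Gc where "Gc g y = prob {x\<in>space M. Phi w i (Xt x) (Yt y) < g}" for g y
    have outeq: "outage M P w h Gm i g = (\<integral>y. Gc g y \<partial>M)" for g
      unfolding outage_def sinr_x Gc_def by (rule cond_indep(2)[OF indXY Phi_pred])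
    have Gcm: "Gc g \<in> borel_measurable M" for g
      unfolding Gc_def[abs_def] by (rule cond_indep(1)[OF indXY Phi_pred])
    define a where "a y = Gm T y + 1" for y
    define b where "b y = Gm R y + w i * Gm T y + w i + 1" for y
    have wi: "0 < w i" and wj: "0 < w j" using i j assms(7-11) by auto
    have apos: "0 < a y" for y using GmF(4)[of T y] by (simp add: a_def)
    have bpos: "0 < b y" for y
    proof -
      have "0 \<le> w i * Gm T y" using GmF(4)[of T y] wi by simp
      thus ?thesis using GmF(4)[of R y] wi by (simp add: b_def)
    qed
    define cf where "cf y = (a y * r 0) * (a y * r i + b y * r j / w j) / 2" for y
    define wf where "wf y = 2 * (a y * r 0) * (a y * r i + b y * r j / w j)" for y
    have Gc_eq: "Gc g y = prob {x\<in>space M. X (sg 0) x / a y + X (sg 1) x / a y * (w j * X (sg 2) x / b y) / (X (sg 1) x / a y + w j * X (sg 2) x / b y) < g}" for g y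
      unfolding Gc_def by (simp add: Phi_def Let_def Xt_def Yt_def a_def b_def sg_def j_def[symmetric])
    have rsg: "r (sg 0) = r 0" "r (sg 1) = r i" "r (sg 2) = r j" by (simp_all add: sg_def)
    have C1: "((\<lambda>g. Gc g y / g\<^sup>2) \<longlongrightarrow> cf y) (at_right 0)" for y
      unfolding Gc_eq cf_def
      using core3(1)[OF indY, where r="\<lambda>n. r (sg n)" and a="a y" and b="b y" and wj="w j"] DX[OF sg_in] rpos[OF sg_in] nnX apos bpos wj
      by (simp add: sg_def)
    have C2: "Gc g y \<le> wf y * g\<^sup>2" if "0 < g" for g y
      unfolding Gc_eq wf_def
      using core3(2)[OF indY, where r="\<lambda>n. r (sg n)" and a="a y" and b="b y" and wj="w j", OF _ _ _ _ _ _ that] DX[OF sg_in] rpos[OF sg_in] nnX apos bpos wj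
      by (simp add: sg_def)
    have mGT[measurable]: "Gm T \<in> borel_measurable M" and mGR[measurable]: "Gm R \<in> borel_measurable M" using GmF by auto
    have intGT: "integrable M (\<lambda>y. Gm T y + 1)" using GmF(2)[of T] by simp
    have intGR: "integrable M (\<lambda>y. Gm R y + 1)" using GmF(2)[of R] by simp
    have inta2: "integrable M (\<lambda>y. (a y)\<^sup>2)"
    proof -
      have "(\<lambda>y. (a y)\<^sup>2) = (\<lambda>y. (Gm T y)\<^sup>2 + 2 * Gm T y + 1)"
        by (auto simp: fun_eq_iff a_def power2_eq_square algebra_simps)
      thus ?thesis using GmF(2,3)[of T] by simp
    qed
    have intab: "integrable M (\<lambda>y. (Gm T y + 1) * (Gm R y + 1))"
      by (rule indep_var_integrable[OF indG intGT intGR])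
    define A where "A = r 0 * (r i + r j * w i / w j) / 2"
    define B where "B = r 0 * r j / (2 * w j)"
    have cf_eq: "cf y = A * (a y)\<^sup>2 + B * ((Gm T y + 1) * (Gm R y + 1))" for y
      unfolding cf_def A_def B_def a_def b_def using wj by (simp add: field_simps power2_eq_square)
    have intcf: "integrable M cf"
      unfolding cf_eq[abs_def] using inta2 intab by simp
    have intwf: "integrable M wf"
    proof -
      have "wf = (\<lambda>y. 4 * cf y)" by (auto simp: fun_eq_iff wf_def cf_def)
      thus ?thesis using intcf by simp
    qed
    have mcf: "cf \<in> borel_measurable M" using intcf by auto
    have DCT: "((\<lambda>t. \<integral>y. Gc (inverse t) y / (inverse t)\<^sup>2 \<partial>M) \<longlongrightarrow> (\<integral>y. cf y \<partial>M)) at_top"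
    proof (rule integral_dominated_convergence_at_top[where w=wf])
      show "cf \<in> borel_measurable M" by (rule mcf)
      show "(\<lambda>y. Gc (inverse t) y / (inverse t)\<^sup>2) \<in> borel_measurable M" for t using Gcm by simp
      show "integrable M wf" by (rule intwf)
      show "AE y in M. ((\<lambda>t. Gc (inverse t) y / (inverse t)\<^sup>2) \<longlongrightarrow> cf y) at_top"
        by (intro AE_I2 filterlim_compose[OF C1 filterlim_inverse_at_right_top])
      show "\<forall>\<^sub>F t in at_top. AE y in M. norm (Gc (inverse t) y / (inverse t)\<^sup>2) \<le> wf y"
        using eventually_gt_at_top[of 0]
      proof (rule eventually_mono)
        fix t :: real assume t: "0 < t"
        show "AE y in M. norm (Gc (inverse t) y / (inverse t)\<^sup>2) \<le> wf y"
        proof (rule AE_I2)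
          fix y
          have g: "0 < inverse t" using t by simp
          have "0 \<le> Gc (inverse t) y" by (simp add: Gc_def)
          moreover have "Gc (inverse t) y \<le> wf y * (inverse t)\<^sup>2" by (rule C2[OF g])
          ultimately show "norm (Gc (inverse t) y / (inverse t)\<^sup>2) \<le> wf y"
            using g by (simp add: divide_le_eq)
        qed
      qed
    qed
    have lim0: "((\<lambda>g. outage M P w h Gm i g / g\<^sup>2) \<longlongrightarrow> (\<integral>y. cf y \<partial>M)) (at_right 0)"
    proof -
      have "((\<lambda>t. outage M P w h Gm i (inverse t) / (inverse t)\<^sup>2) \<longlongrightarrow> (\<integral>y. cf y \<partial>M)) at_top"
        using DCT by (simp add: outeq)
      thus ?thesis unfolding filterlim_at_top_to_right by simp
    qed
    have intval: "(\<integral>y. cf y \<partial>M) = K i"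
    proof -
      have "(\<integral>y. cf y \<partial>M) = A * (\<integral>y. (a y)\<^sup>2 \<partial>M) + B * (\<integral>y. (Gm T y + 1) * (Gm R y + 1) \<partial>M)"
        unfolding cf_eq using inta2 intab by simp
      also have "(\<integral>y. (Gm T y + 1) * (Gm R y + 1) \<partial>M) = (\<integral>y. Gm T y + 1 \<partial>M) * (\<integral>y. Gm R y + 1 \<partial>M)"
        by (rule indep_var_lebesgue_integral[OF indG intGT intGR])
      also have "(\<integral>y. Gm T y + 1 \<partial>M) = (\<integral>y. Gm T y \<partial>M) + 1" using GmF(2)[of T] by (simp add: prob_space)
      also have "(\<integral>y. Gm R y + 1 \<partial>M) = (\<integral>y. Gm R y \<partial>M) + 1" using GmF(2)[of R] by (simp add: prob_space)
      also have "(\<integral>y. (a y)\<^sup>2 \<partial>M) = (\<integral>x. (Gm T x)\<^sup>2 \<partial>M) + 2 * (\<integral>x. Gm T x \<partial>M) + 1"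
      proof -
        have "(\<lambda>y. (a y)\<^sup>2) = (\<lambda>y. (Gm T y)\<^sup>2 + 2 * Gm T y + 1)"
          by (auto simp: fun_eq_iff a_def power2_eq_square algebra_simps)
        thus ?thesis using GmF(2,3)[of T] by (simp add: prob_space)
      qed
      finally show ?thesis
        unfolding K_def A_def B_def r_def T_def[symmetric] j_def[symmetric]
        using alg_K[OF Pp _ _ _ wj, of "Om 0" "Om i" "Om j"] hyp_h[of 0] hyp_h[of i] hyp_h[of j] i j
        by simp
    qed
    show ?thesis using lim0 unfolding intval .
  qed
  let ?o = "\<lambda>i g. outage M P w h Gm i g"
  have l1: "((\<lambda>g. ?o 1 g / g\<^sup>2) \<longlongrightarrow> K 1) (at_right 0)" by (rule per_i) simp
  have l2: "((\<lambda>g. ?o 2 g / g\<^sup>2) \<longlongrightarrow> K 2) (at_right 0)" by (rule per_i) simp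
  have ev: "eventually (\<lambda>g::real. g \<noteq> 0) (at_right 0)"
    using eventually_at_right_less[of 0] by (rule eventually_mono) simp
  have o2: "(?o 2 \<longlongrightarrow> 0) (at_right 0)"
  proof -
    have "((\<lambda>g. ?o 2 g / g\<^sup>2 * g\<^sup>2) \<longlongrightarrow> K 2 * 0\<^sup>2) (at_right 0)"
      by (intro tendsto_mult l2 tendsto_power tendsto_ident_at)
    moreover have "eventually (\<lambda>g. ?o 2 g / g\<^sup>2 * g\<^sup>2 = ?o 2 g) (at_right 0)"
      using ev by (rule eventually_mono) simp
    ultimately show ?thesis by (simp add: Lim_transform_eventually)
  qed
  have sumeq: "(\<Sum>i\<in>{1, 2::nat}. g\<^sup>2 / (2 * (P * Om 0)) *
                ((w i * ((\<integral>x. (Gamma PI L c (tnode i) x)\<^sup>2 \<partial>M)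
                         + 2 * (\<integral>x. Gamma PI L c (tnode i) x \<partial>M) + 1)
                  + ((\<integral>x. Gamma PI L c R x \<partial>M) + 1) * ((\<integral>x. Gamma PI L c (tnode i) x \<partial>M) + 1))
                   / (w (3 - i) * (P * Om (3 - i)))
                 + ((\<integral>x. (Gamma PI L c (tnode i) x)\<^sup>2 \<partial>M)
                     + 2 * (\<integral>x. Gamma PI L c (tnode i) x \<partial>M) + 1) / (P * Om i))) = g\<^sup>2 * K 1 + g\<^sup>2 * K 2" for g
    unfolding K_def Gm_def by simp
  have lim: "((\<lambda>g. (outage_pro M P w h Gm g - (g\<^sup>2 * K 1 + g\<^sup>2 * K 2)) / g\<^sup>2) \<longlongrightarrow> 0) (at_right 0)"
  proof -
    have "((\<lambda>g. ?o 1 g / g\<^sup>2 + ?o 2 g / g\<^sup>2 - ?o 1 g / g\<^sup>2 * ?o 2 g - K 1 - K 2) \<longlongrightarrow> K 1 + K 2 - K 1 * 0 - K 1 - K 2) (at_right 0)"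
      by (intro tendsto_intros l1 l2 o2)
    moreover have "eventually (\<lambda>g. ?o 1 g / g\<^sup>2 + ?o 2 g / g\<^sup>2 - ?o 1 g / g\<^sup>2 * ?o 2 g - K 1 - K 2
        = (outage_pro M P w h Gm g - (g\<^sup>2 * K 1 + g\<^sup>2 * K 2)) / g\<^sup>2) (at_right 0)"
      using ev by (rule eventually_mono) (simp add: outage_pro_def field_simps)
    ultimately show ?thesis by (simp add: Lim_transform_eventually)
  qed
  show ?thesis
    unfolding sumeq
    by (rule smalloI_tendsto) (use lim ev in \<open>simp_all add: Gm_def\<close>)
qed


end
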